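(* Let $q$ be a prime power with $q=4m+1$ such that $-1\notin D_0^4$ (i.e. $-1$ is not a fourth power in $\mathbb{F}_q$). Let $a,b$ be the two distinct square roots of $-1$ in $\mathbb{F}_q$, and let $$M=\begin{pmatrix}1&-1&a&b\\ -1&1&b&a\\ b&a&1&-1\\ a&b&-1&1\end{pmatrix}.$$ Then the $4\times 4$ block matrix whose $(i,j)$ block is $C_{M_{ij}}$ is the adjacency matrix of a directed strongly regular graph with parameters $(4(4m+1),\ 4m,\ m,\ m-1,\ m)$.
   Context: Fix a primitive element $\gamma$ of $\mathbb{F}_q$; $D_i^e=\gamma^i\langle\gamma^e\rangle$ ($e\mid q-1$) are the cyclotomic classes, here with $e=4$. For $\sigma\in\mathbb{F}_q^*$, $C_\sigma$ is the $q\times q$ $0$-$1$ matrix with rows and columns indexed by $\mathbb{F}_q$ and $(C_\sigma)_{x,y}=1$ iff $x\in\sigma y+D_0^e$. A directed strongly regular graph with parameters $(v,k,t,\lambda,\mu)$ is a digraph (no loops, no multiple arcs) on $v$ vertices whose adjacency matrix $A$ satisfies $A^2=tI+\lambda A+\mu(J-I-A)$ and $AJ=JA=kJ$. *)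

theory Defs
  imports Main
begin

definition primitive_element :: "'a::{finite,field} \<Rightarrow> bool" where
  "primitive_element g \<longleftrightarrow> (\<forall>x. x \<noteq> 0 \<longrightarrow> (\<exists>k::nat. x = g ^ k))"

definition cyc_class :: "'a::{finite,field} \<Rightarrow> nat \<Rightarrow> nat \<Rightarrow> 'a set" where
  "cyc_class g e i = {g ^ i * (g ^ e) ^ k | k::nat. True}"

definition Cmat :: "'a::{finite,field} \<Rightarrow> nat \<Rightarrow> 'a \<Rightarrow> 'a \<Rightarrow> 'a \<Rightarrow> int" where
  "Cmat g e \<sigma> x y = (if x - \<sigma> * y \<in> cyc_class g e 0 then 1 else 0)"

definition Mmat :: "'a::field \<Rightarrow> 'a \<Rightarrow> nat \<Rightarrow> nat \<Rightarrow> 'a" where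
  "Mmat a b i j = [[1, -1, a, b], [-1, 1, b, a], [b, a, 1, -1], [a, b, -1, 1]] ! i ! j"

definition block_adj :: "'a::{finite,field} \<Rightarrow> 'a \<Rightarrow> 'a \<Rightarrow> (nat \<times> 'a) \<Rightarrow> (nat \<times> 'a) \<Rightarrow> int" where
  "block_adj g a b u w = Cmat g 4 (Mmat a b (fst u) (fst w)) (snd u) (snd w)"

definition dsrg :: "'v set \<Rightarrow> ('v \<Rightarrow> 'v \<Rightarrow> int) \<Rightarrow> int \<Rightarrow> int \<Rightarrow> int \<Rightarrow> int \<Rightarrow> int \<Rightarrow> bool" where
  "dsrg V A v k t lam mu \<longleftrightarrow>
     finite V \<and> int (card V) = v \<and>
     (\<forall>x\<in>V. \<forall>y\<in>V. A x y = 0 \<or> A x y = 1) \<and>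
     (\<forall>x\<in>V. A x x = 0) \<and>
     (\<forall>x\<in>V. \<forall>y\<in>V. (\<Sum>z\<in>V. A x z * A z y) =
        t * (if x = y then 1 else 0) + lam * A x y
        + mu * (1 - (if x = y then 1 else 0) - A x y)) \<and>
     (\<forall>x\<in>V. (\<Sum>z\<in>V. A x z) = k) \<and>
     (\<forall>y\<in>V. (\<Sum>z\<in>V. A z y) = k)"

end

theory Submission imports Defs begin

lemma ff_fermat:
  fixes x :: "'a :: {finite,field}"
  shows   "x ^ card (UNIV :: 'a set) = x"
proof (cases "x = 0")
  case False
  have "x * (\<Prod>y\<in>UNIV-{0}. x * y) = x * x ^ (card (UNIV :: 'a set) - 1) * \<Prod>(UNIV-{0})"
    by (simp add: prod.distrib mult_ac)
  also have "x * x ^ (card (UNIV :: 'a set) - 1) = x ^ Suc (card (UNIV :: 'a set) - 1)"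
    by (subst power_Suc) auto
  also have "Suc (card (UNIV :: 'a set) - 1) = card (UNIV :: 'a set)"
    using finite_UNIV_card_ge_0[where ?'a = 'a] by simp
  also have "(\<Prod>y\<in>UNIV-{0}. x * y) = (\<Prod>y\<in>UNIV-{0}. y)"
    by (rule prod.reindex_bij_witness[of _ "\<lambda>y. y / x" "\<lambda>y. x * y"]) (use False in auto)
  finally show ?thesis
    by simp
qed (use finite_UNIV_card_ge_0[where ?'a = 'a] in auto)

lemma sum_affine:
  fixes f :: "'a::{finite,field} \<Rightarrow> int"
  assumes "u \<noteq> 0"
  shows "(\<Sum>z\<in>UNIV. f (c + u*z)) = (\<Sum>z\<in>UNIV. f z)"
  by (rule sum.reindex_bij_witness[of _ "\<lambda>w. (w - c)/u" "\<lambda>z. c + u*z"]) (use assms in auto)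

lemma sum4: "(\<Sum>k\<in>{0..<4::nat}. f k) = f 0 + f 1 + f 2 + f 3"
  by (simp add: eval_nat_numeral atLeast0_lessThan_Suc add_ac)

lemma lt4: "(i::nat) < 4 \<Longrightarrow> i = 0 \<or> i = 1 \<or> i = 2 \<or> i = 3" by arith

lemma pig: "(r::nat) < 4 \<Longrightarrow> r1 < 4 \<Longrightarrow> r2 < 4 \<Longrightarrow> r3 < 4 \<Longrightarrow> r4 < 4 \<Longrightarrow>
  r1 \<noteq> r2 \<Longrightarrow> r1 \<noteq> r3 \<Longrightarrow> r1 \<noteq> r4 \<Longrightarrow> r2 \<noteq> r3 \<Longrightarrow> r2 \<noteq> r4 \<Longrightarrow> r3 \<noteq> r4 \<Longrightarrow>
  r = r1 \<or> r = r2 \<or> r = r3 \<or> r = r4" using lt4[of r] lt4[of r1] lt4[of r2] lt4[of r3] lt4[of r4] by fastforce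



definition ind :: "bool \<Rightarrow> int" where "ind P = (if P then 1 else 0)"

locale S =
  fixes g a b :: "'a::{finite,field}" and m :: nat
  assumes prim: "primitive_element g"
    and crd: "card (UNIV :: 'a set) = 4 * m + 1"
    and m1: "- 1 \<notin> cyc_class g 4 0"
    and a2: "a ^ 2 = - 1" and b2: "b ^ 2 = - 1" and ab: "a \<noteq> b"
begin

abbreviation D where "D \<equiv> cyc_class g 4 0"

lemma memD: "x \<in> D \<longleftrightarrow> (\<exists>k. x = (g^4)^k)" by (auto simp: cyc_class_def)

lemma two: "(2::'a) \<noteq> 0"
proof
  assume h: "(2::'a) = 0"
  have "(a - b)^2 = a^2 + b^2 - 2*a*b" by (simp add: power2_eq_square algebra_simps)
  also have "\<dots> = 0" using a2 b2 h by (simp add: mult_2[symmetric])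
  finally show False using ab by simp
qed

lemma bma: "b = - a"
proof -
  have "(a - b) * (a + b) = 0" using a2 b2 by (simp add: power2_eq_square algebra_simps)
  thus ?thesis using ab by (simp add: eq_neg_iff_add_eq_0 add.commute)
qed

lemma aa: "a * a = -1" using a2 by (simp add: power2_eq_square)
lemma ab1: "a * b = 1" using aa bma by simp
lemma anz: "a \<noteq> 0" using aa by auto
lemma bnz: "b \<noteq> 0" using ab1 by auto

lemma m_pos: "m \<ge> 1"
proof -
  have "card {0::'a, 1} \<le> card (UNIV::'a set)" by (rule card_mono) auto
  thus ?thesis using crd by simp
qed

lemma expo: "x \<noteq> 0 \<Longrightarrow> \<exists>k. x = g^k" using prim by (auto simp: primitive_element_def)

lemma gnz: "g \<noteq> 0"
proof
  assume "g = 0"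
  obtain k where k: "(-1::'a) = g^k" using expo by fastforce
  show False
  proof (cases k)
    case 0 thus False using k two by (simp add: eq_neg_iff_add_eq_0 one_add_one)
  next
    case (Suc n) thus False using k \<open>g = 0\<close> by simp
  qed
qed

lemma D_nz: "x \<in> D \<Longrightarrow> x \<noteq> 0" using gnz by (auto simp: memD)
lemma D_one: "1 \<in> D" by (auto simp: memD intro: exI[of _ 0])
lemma D_mult: "x \<in> D \<Longrightarrow> y \<in> D \<Longrightarrow> x * y \<in> D"
  by (auto simp: memD power_add[symmetric])
lemma D_pow: "x \<in> D \<Longrightarrow> x ^ n \<in> D"
proof -
  assume "x \<in> D" then obtain k where "x = (g^4)^k" by (auto simp: memD)
  hence "x ^ n = (g^4)^(k*n)" by (simp add: power_mult)
  thus ?thesis by (auto simp: memD)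
qed

lemma fermat: "(x::'a) \<noteq> 0 \<Longrightarrow> x ^ (4*m) = 1"
  using ff_fermat[of x] crd by simp

lemma D_div: "x \<in> D \<Longrightarrow> y \<in> D \<Longrightarrow> y / x \<in> D"
proof -
  assume x: "x \<in> D" and y: "y \<in> D"
  have "x * x ^ (4*m - 1) = 1" using fermat[OF D_nz[OF x]] m_pos
    by (metis power_Suc Suc_pred' mult_pos_pos zero_less_numeral less_le_trans zero_less_one)
  hence "y / x = y * x ^ (4*m-1)" using D_nz[OF x] by (simp add: field_simps)
  thus ?thesis using D_mult[OF y D_pow[OF x]] by simp
qed

lemma a_nD: "a \<notin> D" using D_mult[of a a] aa m1 by auto
lemma b_nD: "b \<notin> D" using D_mult[of b b] b2 m1 by (auto simp: power2_eq_square)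

lemma m1D: "(-1::'a) \<notin> D" using m1 .

lemma same_cls:
  assumes "x = g^k" "y = g^l" "k mod 4 = l mod 4"
  shows "y / x \<in> D"
proof -
  have x: "x = g^(k mod 4) * (g^4)^(k div 4)"
    using assms(1) by (simp add: power_mult[symmetric] power_add[symmetric])
  have y: "y = g^(k mod 4) * (g^4)^(l div 4)"
    using assms(2,3) by (simp add: power_mult[symmetric] power_add[symmetric])
  have "y / x = (g^4)^(l div 4) / (g^4)^(k div 4)" using x y gnz by simp
  also have "\<dots> \<in> D" by (rule D_div) (auto simp: memD)
  finally show ?thesis .
qed

lemma cover:
  assumes z: "(z::'a) \<noteq> 0"
  shows "z \<in> D \<or> -z \<in> D \<or> b*z \<in> D \<or> a*z \<in> D"
proof -
  obtain k where k: "z = g^k" using expo z by blast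
  obtain k1 where k1: "(1::'a) = g^k1" using expo[of "1::'a"] by auto
  obtain k2 where k2: "(-1::'a) = g^k2" using expo[of "-1::'a"] by auto
  obtain k3 where k3: "a = g^k3" using expo anz by blast
  obtain k4 where k4: "b = g^k4" using expo bnz by blast
  have "k1 mod 4 \<noteq> k2 mod 4" using same_cls[OF k1 k2] m1D by auto
  moreover have "k1 mod 4 \<noteq> k3 mod 4" using same_cls[OF k1 k3] a_nD by auto
  moreover have "k1 mod 4 \<noteq> k4 mod 4" using same_cls[OF k1 k4] b_nD by auto
  moreover have "k2 mod 4 \<noteq> k3 mod 4" using same_cls[OF k2 k3] b_nD bma by auto
  moreover have "k2 mod 4 \<noteq> k4 mod 4" using same_cls[OF k2 k4] a_nD bma by auto
  moreover have "k3 mod 4 \<noteq> k4 mod 4" using same_cls[OF k3 k4] m1D bma anz by auto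
  ultimately have "k mod 4 = k1 mod 4 \<or> k mod 4 = k2 mod 4 \<or> k mod 4 = k3 mod 4 \<or> k mod 4 = k4 mod 4"
    using pig[of "k mod 4" "k1 mod 4" "k2 mod 4" "k3 mod 4" "k4 mod 4"] by simp
  moreover have "z / a = b * z" using ab1 anz by (simp add: field_simps)
  moreover have "z / b = a * z" using ab1 bnz by (simp add: field_simps)
  ultimately show ?thesis using same_cls[OF k1 k] same_cls[OF k2 k] same_cls[OF k3 k] same_cls[OF k4 k]
    by auto
qed

lemma partition:
  assumes z: "(z::'a) \<noteq> 0"
  shows "ind (z \<in> D) + ind (-z \<in> D) + ind (b*z \<in> D) + ind (a*z \<in> D) = 1"
proof -
  have e1: "\<not> (z \<in> D \<and> -z \<in> D)" using D_div[of z "-z"] z m1D by auto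
  have e2: "\<not> (z \<in> D \<and> b*z \<in> D)" using D_div[of z "b*z"] z b_nD by auto
  have e3: "\<not> (z \<in> D \<and> a*z \<in> D)" using D_div[of z "a*z"] z a_nD by auto
  have e4: "\<not> (-z \<in> D \<and> b*z \<in> D)" using D_div[of "-z" "b*z"] z a_nD bma by auto
  have e5: "\<not> (-z \<in> D \<and> a*z \<in> D)" using D_div[of "-z" "a*z"] z b_nD bma by auto
  have e6: "\<not> (b*z \<in> D \<and> a*z \<in> D)" using D_div[of "b*z" "a*z"] z m1D bma anz by auto
  show ?thesis using cover[OF z] e1 e2 e3 e4 e5 e6 unfolding ind_def by auto
qed

lemma sum_ind: "(\<Sum>z\<in>UNIV. ind (z \<in> A)) = int (card (A::'a set))"
  unfolding ind_def by (simp add: sum.If_cases)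

lemma sum_scaled: "u \<noteq> 0 \<Longrightarrow> (\<Sum>z\<in>UNIV. ind (c + u*z \<in> D)) = int (card D)"
  using sum_affine[of u "\<lambda>w. ind (w \<in> D)" c] sum_ind[of D] by simp

lemma card_D: "card D = m"
proof -
  have "(\<Sum>z\<in>UNIV. ind ((z::'a) \<in> UNIV - {0})) = int (4*m)"
    using sum_ind[of "UNIV - {0}"] crd by (simp add: card_Diff_singleton)
  also have "(\<Sum>z\<in>UNIV. ind ((z::'a) \<in> UNIV - {0})) =
     (\<Sum>z\<in>UNIV. ind (0 + 1*z \<in> D) + ind (0 + (-1)*z \<in> D) + ind (0 + b*z \<in> D) + ind (0 + a*z \<in> D))"
  proof (rule sum.cong)
    fix z :: 'a
    show "ind (z \<in> UNIV - {0}) = ind (0 + 1*z \<in> D) + ind (0 + (-1)*z \<in> D) + ind (0 + b*z \<in> D) + ind (0 + a*z \<in> D)"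
    proof (cases "z = 0")
      case True thus ?thesis using D_nz by (auto simp: ind_def)
    next
      case False thus ?thesis using partition[OF False] by (simp add: ind_def)
    qed
  qed simp
  also have "\<dots> = 4 * int (card D)"
    by (simp add: sum.distrib sum_scaled[of 1 0] sum_scaled[of "-1" 0] sum_scaled[OF anz] sum_scaled[OF bnz]
        del: add_0 mult_1 mult_minus1 add_0_left mult_1_left mult_minus_left)
  finally show ?thesis by simp
qed

abbreviation M where "M \<equiv> Mmat a b"

lemma M_diag: "i < 4 \<Longrightarrow> M i i = 1"
  using lt4[of i] by (auto simp: Mmat_def)

lemma M_nz: "i < 4 \<Longrightarrow> j < 4 \<Longrightarrow> M i j \<noteq> 0"
  using lt4[of i] lt4[of j] anz bnz by (auto simp: Mmat_def)

lemma M_mult: "i < 4 \<Longrightarrow> j < 4 \<Longrightarrow> k < 4 \<Longrightarrow> M i k * M k j = M i j"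
  using lt4[of i] lt4[of j] lt4[of k] aa by (auto simp: Mmat_def bma)

lemma M_row:
  assumes i: "i < 4"
  shows "(\<Sum>k\<in>{0..<4}. ind ((z::'a) / M i k \<in> D)) = ind (z \<noteq> 0)"
proof (cases "z = 0")
  case True thus ?thesis using D_nz[of 0] by (simp add: ind_def) blast
next
  case False
  have da: "z / a = b * z" using ab1 anz by (simp add: field_simps)
  have db: "z / b = a * z" using ab1 bnz by (simp add: field_simps)
  have "z / -1 = - z" by simp
  moreover have "ind (z \<noteq> 0) = 1" using False by (simp add: ind_def)
  ultimately show ?thesis using partition[OF False] lt4[OF i]
    by (elim disjE) (simp_all add: sum4 Mmat_def da db)
qed

lemma one_k:
  assumes i: "i < 4" and j: "j < 4" and k: "k < 4"
  shows "(\<Sum>z\<in>UNIV. ind (x - M i k * z \<in> D) * ind (z - M k j * y \<in> D))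
       = (\<Sum>d\<in>UNIV. ind (d \<in> D) * ind ((x - M i j * y - d) / M i k \<in> D))"
proof -
  let ?u = "M i k"
  have u: "?u \<noteq> 0" using M_nz i k by blast
  have "(\<Sum>z\<in>UNIV. ind (x - ?u * z \<in> D) * ind (z - M k j * y \<in> D))
      = (\<Sum>d\<in>UNIV. ind (x - ?u * (x/?u + (-1/?u)*d) \<in> D) * ind ((x/?u + (-1/?u)*d) - M k j * y \<in> D))"
    using sum_affine[of "-1/?u" "\<lambda>z. ind (x - ?u * z \<in> D) * ind (z - M k j * y \<in> D)" "x/?u"] u
    by simp
  also have "\<dots> = (\<Sum>d\<in>UNIV. ind (d \<in> D) * ind ((x - M i j * y - d) / M i k \<in> D))"
  proof (rule sum.cong)
    fix d
    have e1: "x - ?u * (x/?u + (-1/?u)*d) = d" using u by (simp add: field_simps)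
    have e2: "(x/?u + (-1/?u)*d) - M k j * y = (x - M i j * y - d) / M i k"
      using u M_mult[OF i j k] by (simp add: field_simps)
    show "ind (x - ?u * (x/?u + (-1/?u)*d) \<in> D) * ind ((x/?u + (-1/?u)*d) - M k j * y \<in> D)
       = ind (d \<in> D) * ind ((x - M i j * y - d) / M i k \<in> D)" by (simp only: e1 e2)
  qed simp
  finally show ?thesis .
qed

lemma square:
  assumes i: "i < 4" and j: "j < 4"
  shows "(\<Sum>k\<in>{0..<4}. \<Sum>z\<in>UNIV. ind (x - M i k * z \<in> D) * ind (z - M k j * y \<in> D))
       = int m - ind (x - M i j * y \<in> D)"
proof -
  let ?c = "x - M i j * y"
  have "(\<Sum>k\<in>{0..<4}. \<Sum>z\<in>UNIV. ind (x - M i k * z \<in> D) * ind (z - M k j * y \<in> D))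
      = (\<Sum>k\<in>{0..<4}. \<Sum>d\<in>UNIV. ind (d \<in> D) * ind ((?c - d) / M i k \<in> D))"
    using one_k[OF i j] by simp
  also have "\<dots> = (\<Sum>d\<in>UNIV. ind (d \<in> D) * (\<Sum>k\<in>{0..<4}. ind ((?c - d) / M i k \<in> D)))"
    by (simp add: sum.swap[of _ "{0..<4}"] sum_distrib_left)
  also have "\<dots> = (\<Sum>d\<in>UNIV. ind (d \<in> D) * ind (?c - d \<noteq> 0))"
    using M_row[OF i] by simp
  also have "\<dots> = (\<Sum>d\<in>UNIV. ind (d \<in> D) - (if d = ?c then ind (?c \<in> D) else 0))"
    by (rule sum.cong) (auto simp: ind_def)
  also have "\<dots> = int m - ind (?c \<in> D)"
    by (simp add: sum_subtractf sum_ind card_D)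
  finally show ?thesis .
qed

end

theorem mainTheorem10:
  fixes \<gamma> a b :: "'a::{finite,field}" and m :: nat
  assumes "primitive_element \<gamma>"
    and "card (UNIV :: 'a set) = 4 * m + 1"
    and "- 1 \<notin> cyc_class \<gamma> 4 0"
    and "a ^ 2 = - 1" and "b ^ 2 = - 1" and "a \<noteq> b"
  shows "dsrg ({0..<4} \<times> UNIV) (block_adj \<gamma> a b)
           (4 * (4 * int m + 1)) (4 * int m) (int m) (int m - 1) (int m)"
proof -
  interpret S \<gamma> a b m using assms by unfold_locales
  let ?D = "cyc_class \<gamma> 4 0"
  let ?V = "{0..<4::nat} \<times> (UNIV::'a set)"
  have A: "block_adj \<gamma> a b p w = ind (snd p - M (fst p) (fst w) * snd w \<in> ?D)" for p w
    by (simp add: block_adj_def Cmat_def ind_def)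
  have sumV: "(\<Sum>p\<in>?V. f p) = (\<Sum>k\<in>{0..<4}. \<Sum>z\<in>UNIV. f (k, z))" for f :: "nat \<times> 'a \<Rightarrow> int"
    by (simp add: sum.cartesian_product)
  have c1: "finite ?V" by simp
  have c2: "int (card ?V) = 4 * (4 * int m + 1)"
    using assms(2) by (simp add: card_cartesian_product)
  have c3: "\<forall>x\<in>?V. \<forall>y\<in>?V. block_adj \<gamma> a b x y = 0 \<or> block_adj \<gamma> a b x y = 1"
    by (simp add: A ind_def)
  have c4: "\<forall>x\<in>?V. block_adj \<gamma> a b x x = 0"
    using D_nz[of 0] by (auto simp: A M_diag ind_def)
  have c5: "\<forall>x\<in>?V. \<forall>y\<in>?V. (\<Sum>z\<in>?V. block_adj \<gamma> a b x z * block_adj \<gamma> a b z y) =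
        int m * (if x = y then 1 else 0) + (int m - 1) * block_adj \<gamma> a b x y
        + int m * (1 - (if x = y then 1 else 0) - block_adj \<gamma> a b x y)"
  proof (intro ballI)
    fix p w assume p: "p \<in> ?V" and w: "w \<in> ?V"
    obtain i x where px: "p = (i, x)" "i < 4" using p by auto
    obtain j y where wy: "w = (j, y)" "j < 4" using w by auto
    have "(\<Sum>z\<in>?V. block_adj \<gamma> a b p z * block_adj \<gamma> a b z w) = int m - ind (x - M i j * y \<in> ?D)"
      using square[OF px(2) wy(2), of x y] by (simp add: sumV A px wy)
    moreover have "p = w \<Longrightarrow> ind (x - M i j * y \<in> ?D) = 0"
      using D_nz[of 0] px wy M_diag by (auto simp: ind_def)
    ultimately show "(\<Sum>z\<in>?V. block_adj \<gamma> a b p z * block_adj \<gamma> a b z w) =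
        int m * (if p = w then 1 else 0) + (int m - 1) * block_adj \<gamma> a b p w
        + int m * (1 - (if p = w then 1 else 0) - block_adj \<gamma> a b p w)"
      by (auto simp: A px wy algebra_simps)
  qed
  have c6: "\<forall>x\<in>?V. (\<Sum>z\<in>?V. block_adj \<gamma> a b x z) = 4 * int m"
  proof
    fix p assume p: "p \<in> ?V"
    obtain i x where px: "p = (i, x)" "i < 4" using p by auto
    have "(\<Sum>z\<in>UNIV. ind (x + (- M i k) * z \<in> ?D)) = int m" if "k < 4" for k
      using sum_scaled[of "- M i k" x] M_nz[OF px(2) that] card_D by simp
    thus "(\<Sum>z\<in>?V. block_adj \<gamma> a b p z) = 4 * int m"
      by (simp add: sumV A px sum4)
  qed
  have c7: "\<forall>y\<in>?V. (\<Sum>z\<in>?V. block_adj \<gamma> a b z y) = 4 * int m"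
  proof
    fix w assume w: "w \<in> ?V"
    obtain j y where wy: "w = (j, y)" "j < 4" using w by auto
    have "(\<Sum>z\<in>UNIV. ind (- (M k j * y) + 1 * z \<in> ?D)) = int m" for k
      using sum_scaled[of 1 "- (M k j * y)"] card_D by simp
    thus "(\<Sum>z\<in>?V. block_adj \<gamma> a b z w) = 4 * int m"
      by (simp add: sumV A wy sum4)
  qed
  show ?thesis unfolding dsrg_def using c1 c2 c3 c4 c5 c6 c7 by blast
qed

end
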